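(* Let $k\ge 2$ and $\Delta\ge 2^{4^k+1}$ be integers, let $Q=\{Q_1,\dots,Q_\Delta\}$ be an arbitrary multiset in $h_1(\Delta)$, and let $P_\infty$ be the element of $Q$ described in the context. Let $\alpha:\{1,\dots,\Delta\}\to\{\mathrm{out},\mathrm{in}\}$ be any function. Let $\mathcal I\subseteq\{1,\dots,\Delta\}$ be the set of indices $i$ with $\{Q_i,P_\infty\}\notin g_1(\Delta)$ and $11\dots1\notin Q_i$. For $\mathcal J\subseteq\mathcal I$, let $N(\mathcal J)\subseteq\{1,\dots,\Delta\}$ be the set of indices $i$ for which there is $j\in\mathcal J$ with $\{Q_i,Q_j\}\in g_1(\Delta)$ and $\alpha(i)\ne\alpha(j)$. Then there is $\mathcal J^*\subseteq\mathcal I$ with $|\mathcal J^*|>|N(\mathcal J^* )|$ such that $\alpha(j)\neq\alpha(i)$ for all $j\in\mathcal J^*$, $i\in N(\mathcal J^* )$.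
   Context: A trit sequence of length $k$ is a word $a_1\dots a_k$ with $a_j\in\{0,1,2\}$; it "has an $i$ at position $j$" if $a_j=i$; tritwise addition adds entries position by position. $g_1(\Delta)$ is the set of all 2-element multisets $\{W,X\}$ of sets of trit sequences of length $k$ such that there exist $w\in W$, $x\in X$ whose tritwise sum is $22\dots2$. $h_1(\Delta)$ is the set of all multisets $\{W_1,\dots,W_\Delta\}$ of sets of trit sequences of length $k$ such that (A) for any $w_1\in W_1,\dots,w_\Delta\in W_\Delta$ there is an index $1\le j\le k$ such that the number of $w_i$ with a $2$ at position $j$ is strictly greater than the number of $w_i$ with a $0$ at position $j$, and at most $k$ of the $w_i$ have a $0$ at position $j$; and (B) adding any trit sequence of length $k$ to any single $W_i$ yields a multiset violating (A). For $Q\in h_1(\Delta)$ with $\Delta\ge 2^{4^k+1}$, $P_\infty$ denotes the unique element of $Q$ that has multiplicity at least $\Delta-2^{4^k}$ in $Q$ and contains $11\dots1$ (such an element exists and is unique). *)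

theory Defs
  imports Main "HOL-Library.Multiset"
begin

definition tseq :: "nat \<Rightarrow> nat list set" where
  "tseq k = {w. length w = k \<and> set w \<subseteq> {0,1,2}}"

definition ones :: "nat \<Rightarrow> nat list" where
  "ones k = replicate k 1"

definition twos :: "nat \<Rightarrow> nat list" where
  "twos k = replicate k 2"

definition tadd :: "nat list \<Rightarrow> nat list \<Rightarrow> nat list" where
  "tadd w x = map2 (+) w x"

definition g1 :: "nat \<Rightarrow> nat list set multiset set" where
  "g1 k = {M. \<exists>W X. M = {#W, X#} \<and> W \<subseteq> tseq k \<and> X \<subseteq> tseq k \<and>
                 (\<exists>w\<in>W. \<exists>x\<in>X. tadd w x = twos k)}"

definition condA :: "nat \<Rightarrow> nat \<Rightarrow> (nat \<Rightarrow> nat list set) \<Rightarrow> bool" where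
  "condA k \<Delta> Ws \<longleftrightarrow>
     (\<forall>w. (\<forall>i\<in>{1..\<Delta>}. w i \<in> Ws i) \<longrightarrow>
        (\<exists>j<k. card {i\<in>{1..\<Delta>}. w i ! j = 2} > card {i\<in>{1..\<Delta>}. w i ! j = 0}
             \<and> card {i\<in>{1..\<Delta>}. w i ! j = 0} \<le> k))"

definition h1 :: "nat \<Rightarrow> nat \<Rightarrow> nat list set multiset set" where
  "h1 k \<Delta> = {M. \<exists>Ws. M = image_mset Ws (mset_set {1..\<Delta>}) \<and>
                     (\<forall>i\<in>{1..\<Delta>}. Ws i \<subseteq> tseq k) \<and>
                     condA k \<Delta> Ws \<and>
                     (\<forall>i\<in>{1..\<Delta>}. \<forall>t\<in>tseq k. t \<notin> Ws i \<longrightarrow>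
                        \<not> condA k \<Delta> (Ws(i := insert t (Ws i))))}"

datatype orient = Out | In

end

theory Submission
  imports Defs "HOL-Combinatorics.Permutations"
begin

lemma tadd_comm: "tadd w u = tadd u w"
  unfolding tadd_def
proof (induction w arbitrary: u)
  case Nil then show ?case by simp
next
  case (Cons a w) then show ?case by (cases u) auto
qed

lemma tadd_nth:
  assumes "length w = k" "length u = k" "tadd w u = twos k" "p < k"
  shows "w ! p + u ! p = 2"
proof -
  have "tadd w u ! p = 2" using assms(3,4) unfolding twos_def by simp
  moreover have "tadd w u ! p = w ! p + u ! p" unfolding tadd_def using assms(1,2,4) by simp
  ultimately show ?thesis by simp
qed

lemma g1_iff:
  assumes "A \<subseteq> tseq k" "B \<subseteq> tseq k"
  shows "{#A, B#} \<in> g1 k \<longleftrightarrow> (\<exists>w\<in>A. \<exists>u\<in>B. tadd w u = twos k)"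
proof
  assume "{#A, B#} \<in> g1 k"
  then obtain W X where WX: "{#A, B#} = {#W, X#}" "\<exists>w\<in>W. \<exists>x\<in>X. tadd w x = twos k"
    unfolding g1_def by blast
  from WX(1) have "(A = W \<and> B = X) \<or> (A = X \<and> B = W)"
    by (auto simp: add_eq_conv_ex)
  then show "\<exists>w\<in>A. \<exists>u\<in>B. tadd w u = twos k" using WX(2) tadd_comm by metis
next
  assume "\<exists>w\<in>A. \<exists>u\<in>B. tadd w u = twos k"
  then show "{#A, B#} \<in> g1 k" unfolding g1_def using assms by blast
qed

lemma card_perm_inv:
  assumes "p permutes D"
  shows "card {i\<in>D. P (inv p i)} = card {i\<in>D. P i}"
proof -
  have "{i\<in>D. P (inv p i)} = p ` {i\<in>D. P i}"
  proof
    show "{i\<in>D. P (inv p i)} \<subseteq> p ` {i\<in>D. P i}"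
    proof
      fix i assume i: "i \<in> {i\<in>D. P (inv p i)}"
      then have "inv p i \<in> D" using assms by (simp add: permutes_in_image permutes_inv)
      moreover have "p (inv p i) = i" using assms by (meson permutes_inverses(1))
      ultimately show "i \<in> p ` {i\<in>D. P i}" using i by (metis (mono_tags, lifting) image_eqI mem_Collect_eq)
    qed
  next
    show "p ` {i\<in>D. P i} \<subseteq> {i\<in>D. P (inv p i)}"
      using assms by (auto simp: permutes_in_image permutes_inverses(2))
  qed
  moreover have "inj p" using assms permutes_inj by blast
  ultimately show ?thesis by (simp add: card_image inj_on_subset)
qed

lemma condA_perm:
  assumes "p permutes {1..\<Delta>}" "\<forall>x\<in>{1..\<Delta>}. Q x = Ws (p x)" "condA k \<Delta> Ws"
  shows "condA k \<Delta> Q"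
  unfolding condA_def
proof (intro allI impI)
  fix v assume v: "\<forall>i\<in>{1..\<Delta>}. v i \<in> Q i"
  define w where "w = (\<lambda>i. v (inv p i))"
  have "\<forall>i\<in>{1..\<Delta>}. w i \<in> Ws i"
  proof
    fix i assume i: "i \<in> {1..\<Delta>}"
    have ii: "inv p i \<in> {1..\<Delta>}" using permutes_in_image[OF permutes_inv[OF assms(1)]] i by blast
    have "Q (inv p i) = Ws i" using assms(2) ii assms(1) by (metis permutes_inverses(1))
    then show "w i \<in> Ws i" using v ii unfolding w_def by metis
  qed
  then obtain j where j: "j < k" "card {i\<in>{1..\<Delta>}. w i ! j = 2} > card {i\<in>{1..\<Delta>}. w i ! j = 0}"
    "card {i\<in>{1..\<Delta>}. w i ! j = 0} \<le> k"
    using assms(3) unfolding condA_def by blast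
  have e2: "card {i\<in>{1..\<Delta>}. w i ! j = 2} = card {i\<in>{1..\<Delta>}. v i ! j = 2}"
    unfolding w_def using card_perm_inv[OF assms(1), of "\<lambda>x. v x ! j = 2"] by simp
  have e0: "card {i\<in>{1..\<Delta>}. w i ! j = 0} = card {i\<in>{1..\<Delta>}. v i ! j = 0}"
    unfolding w_def using card_perm_inv[OF assms(1), of "\<lambda>x. v x ! j = 0"] by simp
  show "\<exists>j<k. card {i\<in>{1..\<Delta>}. v i ! j = 2} > card {i\<in>{1..\<Delta>}. v i ! j = 0}
             \<and> card {i\<in>{1..\<Delta>}. v i ! j = 0} \<le> k"
    using j e2 e0 by auto
qed

lemma count_card:
  assumes "finite D"
  shows "count (image_mset Q (mset_set D)) P = card {x\<in>D. Q x = P}"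
proof -
  have "count (image_mset Q (mset_set D)) P = sum (count (mset_set D)) (Q -` {P} \<inter> D)"
    using assms by (simp add: count_image_mset)
  also have "\<dots> = sum (\<lambda>_. 1) (Q -` {P} \<inter> D)"
    using assms by (intro sum.cong) auto
  also have "\<dots> = card {x\<in>D. Q x = P}"
    by (simp add: Int_commute vimage_def Collect_conj_eq)
  finally show ?thesis .
qed

lemma hall:
  fixes A :: "'a set" and S :: "'a \<Rightarrow> 'b set"
  assumes "finite A" "\<forall>a\<in>A. finite (S a)"
    "\<forall>J\<subseteq>A. card J \<le> card (\<Union> (S ` J))"
  shows "\<exists>f. inj_on f A \<and> (\<forall>a\<in>A. f a \<in> S a)"
  using assms
proof (induction "card A" arbitrary: A S rule: less_induct)
  case less
  show ?case
  proof (cases "A = {}")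
    case True then show ?thesis by auto
  next
    case ne: False
    show ?thesis
    proof (cases "\<forall>J. J \<subseteq> A \<and> J \<noteq> {} \<and> J \<noteq> A \<longrightarrow> card J < card (\<Union> (S ` J))")
      case True
      obtain a where a: "a \<in> A" using ne by auto
      have "card {a} \<le> card (\<Union> (S ` {a}))" using less.prems(3) a by blast
      then have "card {a} \<le> card (S a)" by simp
      then have "S a \<noteq> {}" by auto
      then obtain x where x: "x \<in> S a" by auto
      define A' where "A' = A - {a}"
      define S' where "S' = (\<lambda>j. S j - {x})"
      have cA': "card A' < card A" unfolding A'_def using a less.prems(1)
        by (metis card_Diff1_less)
      have "\<forall>J\<subseteq>A'. card J \<le> card (\<Union> (S' ` J))"
      proof (intro allI impI)
        fix J assume J: "J \<subseteq> A'"
        show "card J \<le> card (\<Union> (S' ` J))"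
        proof (cases "J = {}")
          case True then show ?thesis by simp
        next
          case False
          have "J \<noteq> A" using J a unfolding A'_def by auto
          moreover have "J \<subseteq> A" using J unfolding A'_def by auto
          ultimately have lt: "card J < card (\<Union> (S ` J))" using True False by blast
          have fin: "finite (\<Union> (S ` J))" using \<open>J \<subseteq> A\<close> less.prems(1,2)
            by (meson finite_UN_I finite_subset subsetD)
          have eq: "\<Union> (S' ` J) = \<Union> (S ` J) - {x}" unfolding S'_def by auto
          have "card (\<Union> (S ` J)) \<le> card (\<Union> (S' ` J)) + 1"
            unfolding eq using fin
            by (simp add: card_Diff_singleton_if) linarith
          then show ?thesis using lt by linarith
        qed
      qed
      moreover have "finite A'" using less.prems(1) unfolding A'_def by auto
      moreover have "\<forall>a\<in>A'. finite (S' a)" using less.prems(2) unfolding A'_def S'_def by auto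
      ultimately obtain f where f: "inj_on f A'" "\<forall>a\<in>A'. f a \<in> S' a"
        using less.hyps[OF cA'] by blast
      define g where "g = f(a := x)"
      have "inj_on g A"
      proof -
        have "A = insert a A'" using a unfolding A'_def by auto
        moreover have "inj_on g A'" using f(1) unfolding g_def A'_def
          by (simp add: inj_on_def)
        moreover have "g a \<notin> g ` A'" using f(2) unfolding g_def A'_def S'_def by auto
        moreover have "a \<notin> A'" unfolding A'_def by auto
        ultimately show ?thesis by simp
      qed
      moreover have "\<forall>b\<in>A. g b \<in> S b" using f(2) x unfolding g_def A'_def S'_def by auto
      ultimately show ?thesis by blast
    next
      case False
      then obtain J0 where J0: "J0 \<subseteq> A" "J0 \<noteq> {}" "J0 \<noteq> A" "card (\<Union> (S ` J0)) \<le> card J0"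
        by (meson not_less)
      define U where "U = \<Union> (S ` J0)"
      have finJ0: "finite J0" using J0(1) less.prems(1) finite_subset by blast
      have finU: "finite U" unfolding U_def using finJ0 J0(1) less.prems(2) by blast
      have cU: "card U = card J0" using J0(1,4) less.prems(3) unfolding U_def by (simp add: le_antisym)
      have c1: "card J0 < card A" using J0 less.prems(1) by (simp add: psubset_card_mono psubsetI)
      obtain f1 where f1: "inj_on f1 J0" "\<forall>a\<in>J0. f1 a \<in> S a"
      proof -
        have h1: "\<forall>J\<subseteq>J0. card J \<le> card (\<Union> (S ` J))" using J0(1) less.prems(3) by blast
        have h2: "\<forall>a\<in>J0. finite (S a)" using J0(1) less.prems(2) by blast
        show ?thesis using less.hyps[OF c1 finJ0 h2 h1] that by blast
      qed
      define A2 where "A2 = A - J0"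
      define S2 where "S2 = (\<lambda>j. S j - U)"
      have c2: "card A2 < card A"
      proof -
        have "card A2 = card A - card J0" unfolding A2_def using finJ0 J0(1) by (simp add: card_Diff_subset)
        moreover have "card J0 > 0" using finJ0 J0(2) by auto
        moreover have "card J0 \<le> card A" using J0(1) less.prems(1) by (simp add: card_mono)
        ultimately show ?thesis by linarith
      qed
      have "\<forall>K\<subseteq>A2. card K \<le> card (\<Union> (S2 ` K))"
      proof (intro allI impI)
        fix K assume K: "K \<subseteq> A2"
        have KJ: "K \<union> J0 \<subseteq> A" using K J0(1) unfolding A2_def by auto
        have dis: "K \<inter> J0 = {}" using K unfolding A2_def by auto
        have finK: "finite K" using K less.prems(1) unfolding A2_def by (meson finite_Diff finite_subset)
        have finUKJ: "finite (\<Union> (S ` (K \<union> J0)))" using KJ less.prems(1,2)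
          by (meson finite_UN_I finite_subset subsetD)
        have eq: "\<Union> (S2 ` K) = \<Union> (S ` (K \<union> J0)) - U" unfolding S2_def U_def by auto
        have sub: "U \<subseteq> \<Union> (S ` (K \<union> J0))" unfolding U_def by auto
        have "card (\<Union> (S2 ` K)) = card (\<Union> (S ` (K \<union> J0))) - card U"
          unfolding eq using sub finUKJ by (simp add: card_Diff_subset finite_subset)
        moreover have "card (K \<union> J0) \<le> card (\<Union> (S ` (K \<union> J0)))" using less.prems(3) KJ by blast
        moreover have "card (K \<union> J0) = card K + card J0" using dis finK finJ0 by (simp add: card_Un_disjoint)
        ultimately show "card K \<le> card (\<Union> (S2 ` K))" using cU by linarith
      qed
      moreover have "finite A2" using less.prems(1) unfolding A2_def by auto
      moreover have "\<forall>a\<in>A2. finite (S2 a)" using less.prems(2) unfolding A2_def S2_def by auto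
      ultimately obtain f2 where f2: "inj_on f2 A2" "\<forall>a\<in>A2. f2 a \<in> S2 a"
        using less.hyps[OF c2] by blast
      define g where "g = (\<lambda>j. if j \<in> J0 then f1 j else f2 j)"
      have "inj_on g A"
        unfolding inj_on_def
      proof (intro ballI impI)
        fix x y assume xy: "x \<in> A" "y \<in> A" "g x = g y"
        show "x = y"
        proof (cases "x \<in> J0"; cases "y \<in> J0")
          assume "x \<in> J0" "y \<in> J0" then show ?thesis using xy f1(1) unfolding g_def inj_on_def by auto
        next
          assume "x \<in> J0" "y \<notin> J0"
          then have "g x \<in> U" using f1(2) unfolding g_def U_def by auto
          moreover have "g y \<notin> U" using \<open>y \<notin> J0\<close> xy(2) f2(2) unfolding g_def S2_def A2_def by auto
          ultimately have "g x \<noteq> g y" by metis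
          then show ?thesis using xy by auto
        next
          assume "x \<notin> J0" "y \<in> J0"
          then have "g y \<in> U" using f1(2) unfolding g_def U_def by auto
          moreover have "g x \<notin> U" using \<open>x \<notin> J0\<close> xy(1) f2(2) unfolding g_def S2_def A2_def by auto
          ultimately have "g x \<noteq> g y" by metis
          then show ?thesis using xy by auto
        next
          assume "x \<notin> J0" "y \<notin> J0" then show ?thesis using xy f2(1) unfolding g_def inj_on_def A2_def by auto
        qed
      qed
      moreover have "\<forall>b\<in>A. g b \<in> S b" using f1(2) f2(2) unfolding g_def A2_def S2_def by auto
      ultimately show ?thesis by blast
    qed
  qed
qed

lemma pairing:
  fixes I :: "'a set" and \<mu> :: "'a \<Rightarrow> 'a" and R :: "'a \<Rightarrow> 'a \<Rightarrow> bool" and c :: "'a \<Rightarrow> bool"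
  assumes "finite I" "inj_on \<mu> I" "\<forall>j\<in>I. R j (\<mu> j)" "\<forall>x y. R x y \<longrightarrow> R y x"
    "\<forall>j\<in>I. \<mu> j \<noteq> j" "\<forall>j\<in>I. \<mu> j \<in> I \<longrightarrow> c (\<mu> j) \<noteq> c j"
  shows "\<exists>\<sigma>. (\<forall>x. \<sigma> (\<sigma> x) = x) \<and> (\<forall>x. \<sigma> x \<noteq> x \<longrightarrow> R x (\<sigma> x) \<and> x \<in> I \<union> \<mu> ` I)
            \<and> (\<forall>j\<in>I. \<sigma> j \<noteq> j)"
  using assms
proof (induction "card I" arbitrary: I rule: less_induct)
  case less
  show ?case
  proof (cases "\<exists>j\<in>I. j \<notin> \<mu> ` I")
    case True
    then obtain j where j: "j \<in> I" "j \<notin> \<mu> ` I" by blast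
    define y where "y = \<mu> j"
    have yj: "y \<noteq> j" using j(1) less.prems(5) y_def by simp
    define I' where "I' = I - {j, y}"
    have cI: "card I' < card I"
    proof (rule psubset_card_mono)
      show "finite I" using less.prems(1) .
      show "I' \<subset> I" unfolding I'_def using j(1) by blast
    qed
    have "\<exists>\<sigma>. (\<forall>x. \<sigma> (\<sigma> x) = x) \<and> (\<forall>x. \<sigma> x \<noteq> x \<longrightarrow> R x (\<sigma> x) \<and> x \<in> I' \<union> \<mu> ` I')
            \<and> (\<forall>j\<in>I'. \<sigma> j \<noteq> j)"
    proof -
      have sI: "I' \<subseteq> I" unfolding I'_def by blast
      have p1: "finite I'" using sI less.prems(1) finite_subset by blast
      have p2: "inj_on \<mu> I'" using sI less.prems(2) inj_on_subset by blast
      have p3: "\<forall>j\<in>I'. R j (\<mu> j)" using sI less.prems(3) by blast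
      have p5: "\<forall>j\<in>I'. \<mu> j \<noteq> j" using sI less.prems(5) by blast
      have p6: "\<forall>j\<in>I'. \<mu> j \<in> I' \<longrightarrow> c (\<mu> j) \<noteq> c j" using sI less.prems(6) by blast
      show ?thesis by (rule less.hyps[OF cI p1 p2 p3 less.prems(4) p5 p6])
    qed
    then obtain \<sigma> where s: "\<forall>x. \<sigma> (\<sigma> x) = x" "\<forall>x. \<sigma> x \<noteq> x \<longrightarrow> R x (\<sigma> x) \<and> x \<in> I' \<union> \<mu> ` I'"
      "\<forall>j\<in>I'. \<sigma> j \<noteq> j" by blast
    have nj: "\<forall>x\<in>I'. \<mu> x \<noteq> j \<and> \<mu> x \<noteq> y"
    proof
      fix x assume x: "x \<in> I'"
      have "\<mu> x \<noteq> j" using x j(2) unfolding I'_def by auto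
      moreover have "\<mu> x \<noteq> y" using x j(1) less.prems(2) unfolding I'_def y_def inj_on_def by auto
      ultimately show "\<mu> x \<noteq> j \<and> \<mu> x \<noteq> y" by blast
    qed
    have supp: "\<And>x. \<sigma> x \<noteq> x \<Longrightarrow> x \<noteq> j \<and> x \<noteq> y"
      using s(2) nj unfolding I'_def by fastforce
    define \<tau> where "\<tau> = (\<lambda>x. if x = j then y else if x = y then j else \<sigma> x)"
    have "\<forall>x. \<tau> (\<tau> x) = x"
    proof
      fix x
      show "\<tau> (\<tau> x) = x"
      proof (cases "x = j \<or> x = y")
        case True then show ?thesis unfolding \<tau>_def using yj by auto
      next
        case False
        have "\<sigma> x \<noteq> j \<and> \<sigma> x \<noteq> y"
        proof (cases "\<sigma> x = x")
          case True then show ?thesis using False by auto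
        next
          case F2: False
          then have "\<sigma> (\<sigma> x) \<noteq> \<sigma> x" using s(1) by metis
          then show ?thesis using supp by blast
        qed
        then show ?thesis unfolding \<tau>_def using False s(1) by auto
      qed
    qed
    moreover have "\<forall>x. \<tau> x \<noteq> x \<longrightarrow> R x (\<tau> x) \<and> x \<in> I \<union> \<mu> ` I"
    proof (intro allI impI)
      fix x assume x: "\<tau> x \<noteq> x"
      show "R x (\<tau> x) \<and> x \<in> I \<union> \<mu> ` I"
      proof (cases "x = j \<or> x = y")
        case True
        have Rjy: "R j y" using less.prems(3) j(1) unfolding y_def by auto
        have Ryj: "R y j" using less.prems(4) Rjy by blast
        show ?thesis using True j(1) Rjy Ryj y_def yj unfolding \<tau>_def by auto
      next
        case False
        then have "\<sigma> x \<noteq> x" "\<tau> x = \<sigma> x" using x unfolding \<tau>_def by auto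
        then show ?thesis using s(2) unfolding I'_def by auto
      qed
    qed
    moreover have "\<forall>i\<in>I. \<tau> i \<noteq> i"
      using s(3) yj unfolding \<tau>_def I'_def by auto
    ultimately show ?thesis by blast
  next
    case False
    then have sub: "I \<subseteq> \<mu> ` I" by blast
    have eqI: "\<mu> ` I = I"
    proof -
      have "card (\<mu> ` I) = card I" using less.prems(2) by (simp add: card_image)
      then have "I = \<mu> ` I" using card_seteq[OF finite_imageI[OF less.prems(1)] sub] by simp
      then show ?thesis by simp
    qed
    define \<tau> where "\<tau> = (\<lambda>x. if x \<in> I then (if c x then \<mu> x else inv_into I \<mu> x) else x)"
    have inv1: "\<And>x. x \<in> I \<Longrightarrow> inv_into I \<mu> x \<in> I \<and> \<mu> (inv_into I \<mu> x) = x"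
      using eqI by (metis inv_into_into f_inv_into_f)
    have inv2: "\<And>x. x \<in> I \<Longrightarrow> inv_into I \<mu> (\<mu> x) = x"
      using less.prems(2) by (simp add: inv_into_f_f)
    have "\<forall>x. \<tau> (\<tau> x) = x"
    proof
      fix x
      show "\<tau> (\<tau> x) = x"
      proof (cases "x \<in> I")
        case False then show ?thesis unfolding \<tau>_def by auto
      next
        case True
        show ?thesis
        proof (cases "c x")
          case True
          have m: "\<mu> x \<in> I" using eqI \<open>x \<in> I\<close> by auto
          then have "\<not> c (\<mu> x)" using less.prems(6) \<open>x \<in> I\<close> True by auto
          then show ?thesis unfolding \<tau>_def using m True \<open>x \<in> I\<close> inv2 by auto
        next
          case False
          obtain z where z: "z = inv_into I \<mu> x" by blast
          have zI: "z \<in> I" "\<mu> z = x" using inv1 \<open>x \<in> I\<close> z by auto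
          then have "c z" using less.prems(6) False \<open>x \<in> I\<close> by auto
          then show ?thesis unfolding \<tau>_def using zI z False \<open>x \<in> I\<close> by auto
        qed
      qed
    qed
    moreover have "\<forall>x. \<tau> x \<noteq> x \<longrightarrow> R x (\<tau> x) \<and> x \<in> I \<union> \<mu> ` I"
    proof (intro allI impI)
      fix x assume x: "\<tau> x \<noteq> x"
      then have xI: "x \<in> I" unfolding \<tau>_def by (auto split: if_splits)
      have "R x (\<tau> x)"
      proof (cases "c x")
        case True then show ?thesis using less.prems(3) xI unfolding \<tau>_def by auto
      next
        case False
        have zI: "inv_into I \<mu> x \<in> I" "\<mu> (inv_into I \<mu> x) = x" using inv1 xI by auto
        then have "R (inv_into I \<mu> x) x" using less.prems(3) by metis
        then have "R x (inv_into I \<mu> x)" using less.prems(4) by blast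
        then show ?thesis using False xI unfolding \<tau>_def by auto
      qed
      then show "R x (\<tau> x) \<and> x \<in> I \<union> \<mu> ` I" using xI by auto
    qed
    moreover have "\<forall>i\<in>I. \<tau> i \<noteq> i"
    proof
      fix i assume i: "i \<in> I"
      show "\<tau> i \<noteq> i"
      proof (cases "c i")
        case True then show ?thesis using less.prems(5) i unfolding \<tau>_def by auto
      next
        case False
        have zI: "inv_into I \<mu> i \<in> I" "\<mu> (inv_into I \<mu> i) = i" using inv1 i by auto
        then have "inv_into I \<mu> i \<noteq> i" using less.prems(5) by metis
        then show ?thesis using False i unfolding \<tau>_def by auto
      qed
    qed
    ultimately show ?thesis by blast
  qed
qed

theorem lemma6:
  fixes k \<Delta> :: nat
    and Q :: "nat \<Rightarrow> nat list set"
    and Pinf :: "nat list set"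
    and \<alpha> :: "nat \<Rightarrow> orient"
  assumes "k \<ge> 2"
    and "\<Delta> \<ge> 2 ^ (4 ^ k + 1)"
    and "image_mset Q (mset_set {1..\<Delta>}) \<in> h1 k \<Delta>"
    and "Pinf \<in># image_mset Q (mset_set {1..\<Delta>})"
    and "count (image_mset Q (mset_set {1..\<Delta>})) Pinf \<ge> \<Delta> - 2 ^ (4 ^ k)"
    and "ones k \<in> Pinf"
  defines "I \<equiv> {i\<in>{1..\<Delta>}. {#Q i, Pinf#} \<notin> g1 k \<and> ones k \<notin> Q i}"
    and "N \<equiv> (\<lambda>J. {i\<in>{1..\<Delta>}. \<exists>j\<in>J. {#Q i, Q j#} \<in> g1 k \<and> \<alpha> i \<noteq> \<alpha> j})"
  shows "\<exists>J\<subseteq>I. card J > card (N J) \<and> (\<forall>j\<in>J. \<forall>i\<in>N J. \<alpha> j \<noteq> \<alpha> i)"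
proof (rule ccontr)
  assume H: "\<not> (\<exists>J\<subseteq>I. card J > card (N J) \<and> (\<forall>j\<in>J. \<forall>i\<in>N J. \<alpha> j \<noteq> \<alpha> i))"
  define D where "D = {1..\<Delta>}"
  have finD: "finite D" unfolding D_def by simp
  have cardD: "card D = \<Delta>" unfolding D_def by simp
  obtain Ws where Ws: "image_mset Q (mset_set D) = image_mset Ws (mset_set D)"
      "\<forall>i\<in>D. Ws i \<subseteq> tseq k" "condA k \<Delta> Ws"
    using assms(3) unfolding h1_def D_def by blast
  obtain p where p: "p permutes D" "\<forall>x\<in>D. Q x = Ws (p x)"
    using image_mset_eq_implies_permutes[OF finD Ws(1)] by blast
  have Qsub: "\<forall>i\<in>D. Q i \<subseteq> tseq k"
  proof
    fix i assume i: "i \<in> D"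
    then have "p i \<in> D" using p(1) by (simp add: permutes_in_image)
    then show "Q i \<subseteq> tseq k" using Ws(2) p(2) i by simp
  qed
  have condQ: "condA k \<Delta> Q" using condA_perm[of p \<Delta> Q Ws k] p Ws(3) unfolding D_def by blast
  define C where "C = {x\<in>D. Q x = Pinf}"
  have cardC: "card C \<ge> \<Delta> - 2 ^ (4 ^ k)"
    using assms(5) count_card[OF finD, of Q Pinf] unfolding C_def D_def by simp
  obtain x0 where x0: "x0 \<in> D" "Q x0 = Pinf" using assms(4) unfolding D_def by auto
  have Pinf_sub: "Pinf \<subseteq> tseq k" using Qsub x0 by blast
  define adj where "adj = (\<lambda>x y. \<exists>w\<in>Q x. \<exists>u\<in>Q y. tadd w u = twos k)"
  have adj_sym: "\<forall>x y. adj x y \<longrightarrow> adj y x"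
  proof (intro allI impI)
    fix x y assume "adj x y"
    then obtain w u where "w \<in> Q x" "u \<in> Q y" "tadd w u = twos k" unfolding adj_def by blast
    moreover have "tadd u w = twos k" using \<open>tadd w u = twos k\<close> tadd_comm[of w u] by simp
    ultimately show "adj y x" unfolding adj_def by blast
  qed
  have g1adj: "\<And>x y. x \<in> D \<Longrightarrow> y \<in> D \<Longrightarrow> {#Q x, Q y#} \<in> g1 k \<longleftrightarrow> adj x y"
    using g1_iff[OF Qsub[rule_format] Qsub[rule_format]] unfolding adj_def by simp
  have g1P: "\<And>x. x \<in> D \<Longrightarrow> {#Q x, Pinf#} \<in> g1 k \<longleftrightarrow> (\<exists>w\<in>Q x. \<exists>u\<in>Pinf. tadd w u = twos k)"
    using g1_iff[OF Qsub[rule_format] Pinf_sub] by simp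
  have ID: "I \<subseteq> D" unfolding I_def D_def by blast
  define S where "S = (\<lambda>j. {i\<in>D. {#Q i, Q j#} \<in> g1 k \<and> \<alpha> i \<noteq> \<alpha> j})"
  have NS: "\<And>J. N J = \<Union> (S ` J)" unfolding N_def S_def D_def by auto
  have monoc: "\<And>J. J \<subseteq> I \<Longrightarrow> (\<forall>j\<in>J. \<alpha> j = a) \<Longrightarrow> card J \<le> card (N J)" for a
  proof -
    fix J assume J: "J \<subseteq> I" "\<forall>j\<in>J. \<alpha> j = a"
    have m1: "\<forall>j\<in>J. \<forall>i\<in>N J. \<alpha> j \<noteq> \<alpha> i"
    proof (intro ballI)
      fix j i assume ji: "j \<in> J" "i \<in> N J"
      then obtain j' where "j' \<in> J" "\<alpha> i \<noteq> \<alpha> j'" unfolding N_def by blast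
      then show "\<alpha> j \<noteq> \<alpha> i" using J(2) ji(1) by metis
    qed
    have "\<not> (card J > card (N J) \<and> (\<forall>j\<in>J. \<forall>i\<in>N J. \<alpha> j \<noteq> \<alpha> i))" using H J(1) by blast
    then show "card J \<le> card (N J)" using m1 by linarith
  qed
  have hallc: "\<forall>J\<subseteq>I. card J \<le> card (\<Union> (S ` J))"
  proof (intro allI impI)
    fix J assume J: "J \<subseteq> I"
    define J1 where "J1 = {j\<in>J. \<alpha> j = Out}"
    define J2 where "J2 = {j\<in>J. \<alpha> j = In}"
    have finJ: "finite J" using finite_subset[OF subset_trans[OF J ID] finD] .
    have JJ: "J = J1 \<union> J2"
    proof
      show "J \<subseteq> J1 \<union> J2"
      proof
        fix j assume "j \<in> J" then show "j \<in> J1 \<union> J2" unfolding J1_def J2_def by (cases "\<alpha> j") auto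
      qed
      show "J1 \<union> J2 \<subseteq> J" unfolding J1_def J2_def by auto
    qed
    have dJ: "J1 \<inter> J2 = {}" unfolding J1_def J2_def by auto
    have s1: "J1 \<subseteq> I" "\<forall>j\<in>J1. \<alpha> j = Out" using J unfolding J1_def by auto
    have s2: "J2 \<subseteq> I" "\<forall>j\<in>J2. \<alpha> j = In" using J unfolding J2_def by auto
    have c1: "card J1 \<le> card (N J1)" by (rule monoc[OF s1])
    have c2: "card J2 \<le> card (N J2)" by (rule monoc[OF s2])
    have NJ: "N J = N J1 \<union> N J2" unfolding JJ N_def by auto
    have dN: "N J1 \<inter> N J2 = {}"
    proof -
      have "\<And>i. i \<in> N J1 \<Longrightarrow> \<alpha> i \<noteq> Out" unfolding N_def J1_def by fastforce
      moreover have "\<And>i. i \<in> N J2 \<Longrightarrow> \<alpha> i \<noteq> In" unfolding N_def J2_def by fastforce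
      moreover have "\<And>i. \<alpha> i \<noteq> Out \<Longrightarrow> \<alpha> i \<noteq> In \<Longrightarrow> False" by (case_tac "\<alpha> i") auto
      ultimately show ?thesis by fastforce
    qed
    have finN: "finite (N J1)" "finite (N J2)" unfolding N_def by auto
    have fJ12: "finite J1" "finite J2" using finJ unfolding J1_def J2_def by auto
    have "card J = card J1 + card J2" using JJ dJ fJ12 card_Un_disjoint[of J1 J2] by simp
    also have "\<dots> \<le> card (N J1) + card (N J2)" using c1 c2 by simp
    also have "\<dots> = card (N J)" using NJ dN finN by (simp add: card_Un_disjoint)
    finally show "card J \<le> card (\<Union> (S ` J))" using NS by simp
  qed
  obtain \<mu>1 where mu1: "inj_on \<mu>1 I" "\<forall>j\<in>I. \<mu>1 j \<in> S j"
  proof -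
    have finI: "finite I" using finite_subset[OF ID finD] .
    have "\<forall>a\<in>I. finite (S a)" unfolding S_def using finD by auto
    then show ?thesis using hall[OF finI _ hallc] that by blast
  qed
  have mu1D: "\<forall>j\<in>I. \<mu>1 j \<in> D" using mu1(2) unfolding S_def by auto
  have mu1adj: "\<forall>j\<in>I. adj j (\<mu>1 j)"
  proof
    fix j assume j: "j \<in> I"
    then have "adj (\<mu>1 j) j" using mu1(2) g1adj ID unfolding S_def by blast
    then show "adj j (\<mu>1 j)" using adj_sym by blast
  qed
  have mu1a: "\<forall>j\<in>I. \<alpha> (\<mu>1 j) \<noteq> \<alpha> j" using mu1(2) unfolding S_def by auto
  have mu1C: "\<forall>j\<in>I. \<mu>1 j \<notin> C"
  proof
    fix j assume j: "j \<in> I"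
    show "\<mu>1 j \<notin> C"
    proof
      assume "\<mu>1 j \<in> C"
      then have "Q (\<mu>1 j) = Pinf" unfolding C_def by auto
      then have "{#Q j, Pinf#} \<in> g1 k" using mu1(2) j unfolding S_def by (auto simp: add_mset_commute)
      then show False using j unfolding I_def by auto
    qed
  qed
  define B where "B = {x\<in>D. x \<notin> C \<and> x \<notin> I \<and> ones k \<notin> Q x}"
  have finB: "finite B" "finite C" unfolding B_def C_def using finD by auto
  have "card B \<le> card (D - C)" using finD unfolding B_def by (intro card_mono) auto
  also have "\<dots> = \<Delta> - card C" using finD cardD unfolding C_def by (simp add: card_Diff_subset)
  also have "\<dots> \<le> card C" using cardC assms(2) by simp
  finally have "card B \<le> card C" .
  then obtain \<mu>2 where mu2: "\<mu>2 ` B \<subseteq> C" "inj_on \<mu>2 B" using card_le_inj[OF finB(1) finB(2)] by blast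
  have mu2adj: "\<forall>x\<in>B. adj x (\<mu>2 x)"
  proof
    fix x assume x: "x \<in> B"
    then have xD: "x \<in> D" "x \<notin> I" "ones k \<notin> Q x" unfolding B_def by auto
    then have "{#Q x, Pinf#} \<in> g1 k" unfolding I_def D_def by auto
    then obtain w u where "w \<in> Q x" "u \<in> Pinf" "tadd w u = twos k" using g1P[OF xD(1)] by blast
    moreover have "Q (\<mu>2 x) = Pinf" using mu2(1) x unfolding C_def by auto
    ultimately show "adj x (\<mu>2 x)" unfolding adj_def by blast
  qed
  define I2 where "I2 = I \<union> B"
  define \<mu> where "\<mu> = (\<lambda>x. if x \<in> I then \<mu>1 x else \<mu>2 x)"
  have CI2: "C \<inter> I2 = {}" unfolding C_def I2_def I_def B_def using assms(6) by auto
  have IB: "I \<inter> B = {}" unfolding B_def by auto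
  have "\<exists>\<sigma>. (\<forall>x. \<sigma> (\<sigma> x) = x) \<and> (\<forall>x. \<sigma> x \<noteq> x \<longrightarrow> adj x (\<sigma> x) \<and> x \<in> I2 \<union> \<mu> ` I2)
            \<and> (\<forall>j\<in>I2. \<sigma> j \<noteq> j)"
  proof (rule pairing[where c = "\<lambda>x. \<alpha> x = Out"])
    show "finite I2" unfolding I2_def using finB(1) finite_subset[OF ID finD] by blast
    show "inj_on \<mu> I2"
      unfolding inj_on_def
    proof (intro ballI impI)
      fix x y assume xy: "x \<in> I2" "y \<in> I2" "\<mu> x = \<mu> y"
      show "x = y"
      proof (cases "x \<in> I"; cases "y \<in> I")
        assume "x \<in> I" "y \<in> I" then show ?thesis using xy mu1(1) unfolding \<mu>_def inj_on_def by auto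
      next
        assume a: "x \<in> I" "y \<notin> I"
        then have "y \<in> B" using xy unfolding I2_def by auto
        then have "\<mu> y \<in> C" using a mu2(1) unfolding \<mu>_def by auto
        moreover have "\<mu> x \<notin> C" using a mu1C unfolding \<mu>_def by auto
        ultimately show ?thesis using xy by auto
      next
        assume a: "x \<notin> I" "y \<in> I"
        then have "x \<in> B" using xy unfolding I2_def by auto
        then have "\<mu> x \<in> C" using a mu2(1) unfolding \<mu>_def by auto
        moreover have "\<mu> y \<notin> C" using a mu1C unfolding \<mu>_def by auto
        ultimately show ?thesis using xy by auto
      next
        assume a: "x \<notin> I" "y \<notin> I"
        then have "x \<in> B" "y \<in> B" using xy unfolding I2_def by auto
        then show ?thesis using xy a mu2(2) unfolding \<mu>_def inj_on_def by auto
      qed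
    qed
    show "\<forall>j\<in>I2. adj j (\<mu> j)" using mu1adj mu2adj unfolding I2_def \<mu>_def by auto
    show "\<forall>x y. adj x y \<longrightarrow> adj y x" by (rule adj_sym)
    show "\<forall>j\<in>I2. \<mu> j \<noteq> j"
    proof
      fix j assume j: "j \<in> I2"
      show "\<mu> j \<noteq> j"
      proof (cases "j \<in> I")
        case True then show ?thesis using mu1a unfolding \<mu>_def by auto
      next
        case False
        then have "j \<in> B" using j unfolding I2_def by auto
        then have "\<mu> j \<in> C" "j \<notin> C" using False mu2(1) unfolding \<mu>_def B_def by auto
        then show ?thesis by auto
      qed
    qed
    show "\<forall>j\<in>I2. \<mu> j \<in> I2 \<longrightarrow> (\<alpha> (\<mu> j) = Out) \<noteq> (\<alpha> j = Out)"
    proof (intro ballI impI)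
      fix j assume j: "j \<in> I2" "\<mu> j \<in> I2"
      show "(\<alpha> (\<mu> j) = Out) \<noteq> (\<alpha> j = Out)"
      proof (cases "j \<in> I")
        case True
        then have "\<alpha> (\<mu> j) \<noteq> \<alpha> j" using mu1a unfolding \<mu>_def by auto
        then show ?thesis by (cases "\<alpha> (\<mu> j)"; cases "\<alpha> j") auto
      next
        case False
        then have "j \<in> B" using j unfolding I2_def by auto
        then have "\<mu> j \<in> C" using False mu2(1) unfolding \<mu>_def by auto
        then show ?thesis using j(2) CI2 by auto
      qed
    qed
  qed
  then obtain \<sigma> where sg: "\<forall>x. \<sigma> (\<sigma> x) = x" "\<forall>x. \<sigma> x \<noteq> x \<longrightarrow> adj x (\<sigma> x) \<and> x \<in> I2 \<union> \<mu> ` I2"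
      "\<forall>j\<in>I2. \<sigma> j \<noteq> j" by blast
  have I2D: "I2 \<union> \<mu> ` I2 \<subseteq> D"
  proof -
    have "I2 \<subseteq> D" unfolding I2_def B_def using ID by auto
    moreover have "\<mu> ` I2 \<subseteq> D" using mu1D mu2(1) unfolding \<mu>_def I2_def C_def by auto
    ultimately show ?thesis by auto
  qed
  have sD: "\<And>x. x \<in> D \<Longrightarrow> \<sigma> x \<in> D"
  proof -
    fix x assume x: "x \<in> D"
    show "\<sigma> x \<in> D"
    proof (cases "\<sigma> x = x")
      case True then show ?thesis using x by simp
    next
      case False
      then have "\<sigma> (\<sigma> x) \<noteq> \<sigma> x" using sg(1) by metis
      then show ?thesis using sg(2) I2D by blast
    qed
  qed
  define pick where "pick = (\<lambda>x y. SOME wu. fst wu \<in> Q x \<and> snd wu \<in> Q y \<and> tadd (fst wu) (snd wu) = twos k)"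
  have pick: "\<And>x y. adj x y \<Longrightarrow> fst (pick x y) \<in> Q x \<and> snd (pick x y) \<in> Q y \<and> tadd (fst (pick x y)) (snd (pick x y)) = twos k"
  proof -
    fix x y assume "adj x y"
    then obtain w u where "w \<in> Q x" "u \<in> Q y" "tadd w u = twos k" unfolding adj_def by blast
    then have "\<exists>wu. fst wu \<in> Q x \<and> snd wu \<in> Q y \<and> tadd (fst wu) (snd wu) = twos k" by (intro exI[of _ "(w,u)"]) auto
    then show "fst (pick x y) \<in> Q x \<and> snd (pick x y) \<in> Q y \<and> tadd (fst (pick x y)) (snd (pick x y)) = twos k"
      unfolding pick_def by (rule someI_ex)
  qed
  define v where "v = (\<lambda>x. if \<sigma> x = x then ones k else if x < \<sigma> x then fst (pick x (\<sigma> x)) else snd (pick (\<sigma> x) x))"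
  have vQ: "\<And>x. x \<in> D \<Longrightarrow> v x \<in> Q x"
  proof -
    fix x assume x: "x \<in> D"
    show "v x \<in> Q x"
    proof (cases "\<sigma> x = x")
      case True
      then have "x \<notin> I2" using sg(3) by auto
      then have "x \<in> C \<or> ones k \<in> Q x" using x unfolding I2_def B_def I_def by auto
      then have "ones k \<in> Q x" using assms(6) unfolding C_def by auto
      then show ?thesis using True unfolding v_def by simp
    next
      case False
      have a1: "adj x (\<sigma> x)" using False sg(2) by blast
      then have a2: "adj (\<sigma> x) x" using adj_sym by blast
      show ?thesis
      proof (cases "x < \<sigma> x")
        case True then show ?thesis using False pick[OF a1] unfolding v_def by simp
      next
        case F2: False then show ?thesis using False pick[OF a2] unfolding v_def by simp
      qed
    qed
  qed
  have vpair: "\<And>x. \<sigma> x \<noteq> x \<Longrightarrow> tadd (v x) (v (\<sigma> x)) = twos k"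
  proof -
    fix x assume F: "\<sigma> x \<noteq> x"
    have a1: "adj x (\<sigma> x)" using F sg(2) by blast
    then have a2: "adj (\<sigma> x) x" using adj_sym by blast
    have F2: "\<sigma> (\<sigma> x) \<noteq> \<sigma> x" using F sg(1) by metis
    show "tadd (v x) (v (\<sigma> x)) = twos k"
    proof (cases "x < \<sigma> x")
      case True
      then have "v x = fst (pick x (\<sigma> x))" "v (\<sigma> x) = snd (pick x (\<sigma> x))"
        unfolding v_def using F F2 sg(1) by auto
      then show ?thesis using pick[OF a1] by simp
    next
      case False
      then have "\<sigma> x < x" using F by simp
      then have "v x = snd (pick (\<sigma> x) x)" "v (\<sigma> x) = fst (pick (\<sigma> x) x)"
        unfolding v_def using F F2 sg(1) by auto
      then show ?thesis using pick[OF a2] tadd_comm by metis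
    qed
  qed
  have vlen: "\<And>x. x \<in> D \<Longrightarrow> length (v x) = k"
    using vQ Qsub unfolding tseq_def by blast
  have flip: "\<And>x q a. x \<in> D \<Longrightarrow> q < k \<Longrightarrow> v x ! q = a \<Longrightarrow> a \<noteq> 1 \<Longrightarrow> \<sigma> x \<in> D \<and> v (\<sigma> x) ! q = 2 - a \<and> \<sigma> x \<noteq> x"
  proof -
    fix x q a assume x: "x \<in> D" "q < k" "v x ! q = a" "a \<noteq> 1"
    have F: "\<sigma> x \<noteq> x"
    proof
      assume "\<sigma> x = x"
      then have "v x = ones k" unfolding v_def by simp
      then show False using x unfolding ones_def by simp
    qed
    have "v x ! q + v (\<sigma> x) ! q = 2"
      using tadd_nth[OF vlen[OF x(1)] vlen[OF sD[OF x(1)]] vpair[OF F] x(2)] .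
    then show "\<sigma> x \<in> D \<and> v (\<sigma> x) ! q = 2 - a \<and> \<sigma> x \<noteq> x" using x sD F by auto
  qed
  have injs: "inj \<sigma>" using sg(1) by (metis injI)
  have bal: "\<And>q. q < k \<Longrightarrow> card {i\<in>D. v i ! q = 2} = card {i\<in>D. v i ! q = 0}"
  proof -
    fix q assume q: "q < k"
    have fin: "finite {i\<in>D. v i ! q = 2}" "finite {i\<in>D. v i ! q = 0}" using finD by auto
    have s1: "\<sigma> ` {i\<in>D. v i ! q = 2} \<subseteq> {i\<in>D. v i ! q = 0}"
      using flip[OF _ q, of _ 2] by fastforce
    have s2: "\<sigma> ` {i\<in>D. v i ! q = 0} \<subseteq> {i\<in>D. v i ! q = 2}"
      using flip[OF _ q, of _ 0] by fastforce
    have "card {i\<in>D. v i ! q = 2} \<le> card {i\<in>D. v i ! q = 0}"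
      using card_inj_on_le[OF inj_on_subset[OF injs] s1 fin(2)] by simp
    moreover have "card {i\<in>D. v i ! q = 0} \<le> card {i\<in>D. v i ! q = 2}"
      using card_inj_on_le[OF inj_on_subset[OF injs] s2 fin(1)] by simp
    ultimately show "card {i\<in>D. v i ! q = 2} = card {i\<in>D. v i ! q = 0}" by simp
  qed
  have "\<forall>i\<in>{1..\<Delta>}. v i \<in> Q i" using vQ unfolding D_def by blast
  then obtain q where "q < k" "card {i\<in>{1..\<Delta>}. v i ! q = 2} > card {i\<in>{1..\<Delta>}. v i ! q = 0}"
    using condQ unfolding condA_def by blast
  then show False using bal unfolding D_def by fastforce
qed

end
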